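(* For all positive integers $n$ and non-negative integers $k$, $$\det_{0\le i,j\le n-1}\Big(\sum_{l=-k}^{k+1}\binom{2i+2j}{i+j+l}\Big)= \begin{cases}(-1)^{n_1\binom{k+1}2}, & n=(k+1)n_1,\\ (-1)^{n_1\binom{k+1}2}, & n=(k+1)n_1+1,\\ 0, & n\not\equiv0,1\pmod{k+1},\end{cases}$$ with $n_1$ a non-negative integer (for $k=0$, the first case is meant).
   Context: Binomial coefficients $\binom ab$ (with $a\ge0$) are $0$ if $b<0$ or $b>a$. *)

theory Defs
  imports Main "Jordan_Normal_Form.Determinant"
begin

definition binom_int :: "nat \<Rightarrow> int \<Rightarrow> int" where
  "binom_int a b = (if 0 \<le> b \<and> b \<le> int a then int (a choose nat b) else 0)"

end

theory Submission
  imports Defs "HOL-Computational_Algebra.Formal_Laurent_Series" "HOL-Computational_Algebra.Polynomial"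
begin


definition Z :: "int \<Rightarrow> int fls" where "Z i = fls_shift (-i) 1"

lemma Z_nth[simp]: "fls_nth (Z i) t = (if t = i then 1 else 0)"
  by (simp add: Z_def)

lemma Z_mult[simp]: "Z i * Z j = Z (i+j)"
  unfolding Z_def using fls_X_intpow_times_fls_X_intpow[of i j] by simp

lemma Z_mult_assoc[simp]: "Z i * (Z j * f) = Z (i+j) * f"
  by (simp add: mult.assoc[symmetric])

lemma mult_Z_nth[simp]: "fls_nth (f * Z i) t = fls_nth f (t - i)"
  unfolding Z_def using fls_X_intpow_times_conv_shift(2)[of f i] by simp

lemma Z_eq_iff[simp]: "Z a = Z b \<longleftrightarrow> a = b"
  by (metis Z_nth zero_neq_one)

lemma Z_0[simp]: "Z 0 = 1"
  by (simp add: Z_def)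

definition xL :: "int fls" where "xL = Z 1 + 2 + Z (-1)"

lemma binom_int_Suc: "binom_int (Suc a) b = binom_int a (b - 1) + binom_int a b"
proof -
  consider "b < 0" | "b = 0" | "0 < b \<and> b \<le> int a" | "b = int a + 1" | "b > int a + 1" by linarith
  then show ?thesis
  proof cases
    case 3
    define c where "c = nat b - 1"
    have c: "nat b = Suc c" "nat (b - 1) = c" "c < a" using 3 by (auto simp: c_def)
    then show ?thesis using 3 unfolding binom_int_def by (auto simp: binomial_Suc_Suc)
  next
    case 4
    then have "nat b = Suc a" by simp
    then show ?thesis using 4 unfolding binom_int_def by auto
  qed (auto simp: binom_int_def)
qed

lemma times_xL_nth: "fls_nth (f * xL) t = fls_nth f (t - 1) + 2 * fls_nth f t + fls_nth f (t + 1)"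
proof -
  have "f * xL = f * Z 1 + 2 * f + f * Z (-1)" by (simp add: xL_def algebra_simps)
  then show ?thesis by (simp add: fls_mult_of_int_nth[of 2, simplified])
qed

lemma xpow_nth: "fls_nth (xL ^ m) t = binom_int (2*m) (int m + t)"
proof (induction m arbitrary: t)
  case 0
  then show ?case by (simp add: binom_int_def xL_def)
next
  case (Suc m)
  have "fls_nth (xL ^ Suc m) t = fls_nth (xL^m * xL) t" by (simp only: power_Suc2)
  also have "\<dots> = binom_int (2*m) (int m + t - 1) + 2 * binom_int (2*m) (int m + t)
      + binom_int (2*m) (int m + t + 1)" unfolding times_xL_nth Suc.IH by (simp add: algebra_simps)
  also have "\<dots> = binom_int (2 * Suc m) (int (Suc m) + t)"
    using binom_int_Suc[of "Suc (2*m)" "int (Suc m) + t"] binom_int_Suc[of "2*m" "int (Suc m) + t"]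
      binom_int_Suc[of "2*m" "int (Suc m) + t - 1"]
    by (simp add: algebra_simps)
  finally show ?case .
qed



definition wL :: "nat \<Rightarrow> int fls" where "wL k = (\<Sum>l\<in>{-int k..int k + 1}. Z (-l))"
definition LL :: "nat \<Rightarrow> int fls \<Rightarrow> int" where "LL k f = fls_nth (f * wL k) 0"

lemma LL_xpow: "LL k (xL^m) = (\<Sum>l\<in>{-int k..int k + 1}. binom_int (2*m) (int m + l))"
  unfolding LL_def wL_def by (simp add: sum_distrib_left fls_nth_sum xpow_nth)

lemma LL_add: "LL k (f + g) = LL k f + LL k g"
  unfolding LL_def by (simp add: algebra_simps)
lemma LL_diff: "LL k (f - g) = LL k f - LL k g"
  unfolding LL_def by (simp add: algebra_simps)
lemma LL_sum: "LL k (\<Sum>i\<in>A. f i) = (\<Sum>i\<in>A. LL k (f i))"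
  unfolding LL_def by (simp add: sum_distrib_right fls_nth_sum)
lemma LL_of_int: "LL k (of_int c * f) = c * LL k f"
  unfolding LL_def by (simp add: mult.assoc)

lemma wL_tele_aux: "(\<Sum>l\<in>{a..a + int n - 1}. Z (-l)) * (Z 1 - 1) = Z (1 - a) - Z (1 - a - int n)"
proof (induction n)
  case 0
  then show ?case by simp
next
  case (Suc n)
  have e: "{a..a + int (Suc n) - 1} = insert (a + int n) {a..a + int n - 1}" by auto
  have "(\<Sum>l\<in>{a..a + int (Suc n) - 1}. Z (-l)) = Z (-(a + int n)) + (\<Sum>l\<in>{a..a + int n - 1}. Z (-l))"
    unfolding e by (subst sum.insert) auto
  then show ?case using Suc by (simp add: algebra_simps)
qed

lemma wL_tele: "wL k * (Z 1 - 1) = Z (int k + 1) - Z (-(int k + 1))"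
  using wL_tele_aux[of "-int k" "2*k+2"] unfolding wL_def by (simp add: algebra_simps)



lemma mp_add: "map_poly (of_int :: int \<Rightarrow> 'a::comm_ring_1) (p + q) = map_poly of_int p + map_poly of_int q"
  by (rule poly_eqI) (simp add: coeff_map_poly)
lemma mp_diff: "map_poly (of_int :: int \<Rightarrow> 'a::comm_ring_1) (p - q) = map_poly of_int p - map_poly of_int q"
  by (rule poly_eqI) (simp add: coeff_map_poly)
lemma mp_mult: "map_poly (of_int :: int \<Rightarrow> 'a::comm_ring_1) (p * q) = map_poly of_int p * map_poly of_int q"
  by (rule poly_eqI) (simp add: coeff_map_poly coeff_mult of_int_sum)

definition ev :: "int poly \<Rightarrow> int fls" where "ev p = poly (map_poly of_int p) xL"

lemma ev_add: "ev (p + q) = ev p + ev q" unfolding ev_def by (simp add: mp_add)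
lemma ev_diff: "ev (p - q) = ev p - ev q" unfolding ev_def by (simp add: mp_diff)
lemma ev_mult: "ev (p * q) = ev p * ev q" unfolding ev_def by (simp add: mp_mult)
lemma ev_1: "ev 1 = 1" unfolding ev_def by simp
lemma ev_const: "ev [:c:] = of_int c" unfolding ev_def by (simp add: map_poly_pCons)
lemma ev_lin: "ev [:-2, 1:] = Z 1 + Z (-1)" unfolding ev_def xL_def by (simp add: map_poly_pCons)

lemma ev_sum_form:
  assumes "\<forall>j>a. coeff p j = 0" "a < n"
  shows "ev p = (\<Sum>r<n. of_int (coeff p r) * xL ^ r)"
proof -
  have d: "degree (map_poly (of_int :: int \<Rightarrow> int fls) p) < n"
  proof -
    have "degree (map_poly (of_int :: int \<Rightarrow> int fls) p) \<le> a"
      using assms(1) by (intro degree_le) (simp add: coeff_map_poly)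
    then show ?thesis using assms(2) by simp
  qed
  have "ev p = (\<Sum>i\<le>degree (map_poly (of_int :: int \<Rightarrow> int fls) p). coeff (map_poly of_int p) i * xL ^ i)"
    unfolding ev_def by (rule poly_altdef)
  also have "\<dots> = (\<Sum>i<n. coeff (map_poly (of_int :: int \<Rightarrow> int fls) p) i * xL ^ i)"
    apply (rule sum.mono_neutral_left)
    using d by (auto simp: coeff_eq_0)
  finally show ?thesis by (simp add: coeff_map_poly)
qed

lemma ev_nth_above:
  assumes "\<forall>j>a. coeff p j = 0" "int a < s"
  shows "fls_nth (ev p) s = 0"
proof -
  have "ev p = (\<Sum>r<Suc a. of_int (coeff p r) * xL ^ r)" using ev_sum_form[OF assms(1), of "Suc a"] by simp
  then show ?thesis using assms(2) by (simp add: fls_nth_sum xpow_nth binom_int_def)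
qed

fun Cq :: "nat \<Rightarrow> int poly" where
  "Cq 0 = [:2:]"
| "Cq (Suc 0) = [:-2, 1:]"
| "Cq (Suc (Suc n)) = [:-2, 1:] * Cq (Suc n) - Cq n"

lemma ev_Cq: "ev (Cq n) = Z (int n) + Z (- int n)"
proof (induction n rule: Cq.induct)
  case 1
  then show ?case by (simp add: ev_const)
next
  case 2
  then show ?case by (simp add: ev_lin)
next
  case (3 n)
  have "ev (Cq (Suc (Suc n))) = ev [:-2,1:] * ev (Cq (Suc n)) - ev (Cq n)"
    by (simp only: Cq.simps ev_mult ev_diff)
  then show ?case
    by (simp del: Cq.simps add: ev_lin 3 algebra_simps)
qed

definition mon :: "nat \<Rightarrow> int poly \<Rightarrow> bool" where
  "mon a p \<longleftrightarrow> (\<forall>j>a. coeff p j = 0) \<and> coeff p a = 1"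

lemma mon_degree: "mon a p \<Longrightarrow> degree p = a"
  unfolding mon_def by (metis degree_le le_degree le_antisym zero_neq_one)

lemma mon_mult: "mon a p \<Longrightarrow> mon b q \<Longrightarrow> mon (a + b) (p * q)"
proof -
  assume p: "mon a p" and q: "mon b q"
  have dp: "degree p = a" and dq: "degree q = b" using mon_degree p q by auto
  have "coeff (p * q) (a + b) = 1"
    using coeff_mult_degree_sum[of p q] dp dq p q unfolding mon_def by simp
  moreover have "\<forall>j>a+b. coeff (p*q) j = 0"
    using degree_mult_le[of p q] dp dq by (auto intro: coeff_eq_0)
  ultimately show ?thesis unfolding mon_def by simp
qed

lemma mon_add_low: "mon a p \<Longrightarrow> \<forall>j\<ge>a. coeff q j = 0 \<Longrightarrow> mon a (p + q)"
  unfolding mon_def by auto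
lemma mon_diff_low: "mon a p \<Longrightarrow> \<forall>j\<ge>a. coeff q j = 0 \<Longrightarrow> mon a (p - q)"
  unfolding mon_def by auto

lemma Cq_coeff: "(\<forall>j>n. coeff (Cq n) j = 0) \<and> (n \<ge> 1 \<longrightarrow> coeff (Cq n) n = 1)"
proof (induction n rule: Cq.induct)
  case 3
  then show ?case by (auto simp: coeff_pCons split: nat.split)
qed (auto simp: coeff_pCons split: nat.split)

lemma mon_Cq: "n \<ge> 1 \<Longrightarrow> mon n (Cq n)"
  using Cq_coeff[of n] unfolding mon_def by auto



fun Uq :: "nat \<Rightarrow> int poly" where
  "Uq 0 = 1"
| "Uq (Suc r) = Cq (Suc r) - Uq r"

lemma mon_Uq: "mon r (Uq r)"
proof (induction r)
  case 0 then show ?case by (simp add: mon_def coeff_pCons split: nat.split)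
next
  case (Suc r)
  then show ?case using mon_Cq[of "Suc r"] by (simp add: mon_diff_low mon_def)
qed

lemma mon_Uq1: "r \<ge> 1 \<Longrightarrow> mon r (Uq r - 1)"
  using mon_Uq[of r] by (intro mon_diff_low) (auto simp: coeff_pCons split: nat.split)

lemma ev_Uq_nth: "fls_nth (ev (Uq r)) d =
  (if - int r \<le> d \<and> d \<le> int r then (if even (int r + d) then 1 else -1) else 0)"
proof (induction r arbitrary: d)
  case 0 then show ?case by (simp add: ev_1)
next
  case (Suc r)
  have "ev (Uq (Suc r)) = Z (int (Suc r)) + Z (- int (Suc r)) - ev (Uq r)"
    by (simp add: ev_diff ev_Cq)
  then show ?case using Suc by auto
qed

lemma ev_Uq_mult: "ev (Uq r) * (1 + Z 1) = Z (int r + 1) + Z (- int r)"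
proof (induction r)
  case 0 then show ?case by (simp add: ev_1)
next
  case (Suc r)
  have "ev (Uq (Suc r)) * (1 + Z 1) = (Z (int (Suc r)) + Z (- int (Suc r))) * (1 + Z 1) - ev (Uq r) * (1 + Z 1)"
    by (simp only: Uq.simps ev_diff ev_Cq left_diff_distrib)
  also have "\<dots> = Z (int (Suc r) + 1) + Z (- int (Suc r))"
    unfolding Suc by (simp add: algebra_simps)
  finally show ?case .
qed

fun Chq :: "nat \<Rightarrow> nat \<Rightarrow> int poly" where
  "Chq K 0 = 1"
| "Chq K (Suc 0) = Cq K"
| "Chq K (Suc (Suc m)) = Chq K m + Cq (Suc (Suc m) * K)"

lemma mon_Chq: "K \<ge> 1 \<Longrightarrow> mon (m * K) (Chq K m)"
proof (induction K m rule: Chq.induct)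
  case (1 K) then show ?case by (simp add: mon_def coeff_pCons split: nat.split)
next
  case (2 K) then show ?case by (simp add: mon_Cq)
next
  case (3 K m)
  have "mon (Suc (Suc m) * K) (Cq (Suc (Suc m) * K))" using 3 by (intro mon_Cq) simp
  moreover have "\<forall>j\<ge>Suc (Suc m) * K. coeff (Chq K m) j = 0"
    using 3 unfolding mon_def by (auto simp: algebra_simps)
  ultimately show ?case by (simp add: mon_def)
qed

lemma ev_Chq_mult: "ev (Chq K m) * (Z (int K) - Z (- int K)) = Z ((int m + 1) * int K) - Z (- ((int m + 1) * int K))"
proof (induction K m rule: Chq.induct)
  case (1 K) then show ?case by (simp add: ev_1)
next
  case (2 K) then show ?case by (simp add: ev_Cq algebra_simps)
next
  case (3 K m)
  have "ev (Chq K (Suc (Suc m))) * (Z (int K) - Z (- int K)) = ev (Chq K m) * (Z (int K) - Z (- int K))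
     + (Z (int (Suc (Suc m) * K)) + Z (- int (Suc (Suc m) * K))) * (Z (int K) - Z (- int K))"
    by (simp only: Chq.simps ev_add ev_Cq distrib_right)
  also have "\<dots> = Z ((int (Suc (Suc m)) + 1) * int K) - Z (- ((int (Suc (Suc m)) + 1) * int K))"
    unfolding 3 by (simp add: algebra_simps)
  finally show ?case .
qed

fun Pmq :: "nat \<Rightarrow> nat \<Rightarrow> int poly" where
  "Pmq K 0 = 1"
| "Pmq K (Suc m) = Cq (Suc m * K) - Pmq K m"

lemma mon_Pmq: "K \<ge> 1 \<Longrightarrow> mon (m * K) (Pmq K m)"
proof (induction m)
  case 0 then show ?case by (simp add: mon_def coeff_pCons split: nat.split)
next
  case (Suc m)
  have "mon (Suc m * K) (Cq (Suc m * K))" using Suc by (intro mon_Cq) simp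
  moreover have "\<forall>j\<ge>Suc m * K. coeff (Pmq K m) j = 0"
    using Suc unfolding mon_def by (auto simp: algebra_simps)
  ultimately show ?case by (simp add: mon_def)
qed

lemma ev_Pmq_mult: "ev (Pmq K m) * (Z (int K) + 1) = Z ((int m + 1) * int K) + Z (- (int m * int K))"
proof (induction m)
  case 0 then show ?case by (simp add: ev_1 algebra_simps)
next
  case (Suc m)
  have "ev (Pmq K (Suc m)) * (Z (int K) + 1) = (Z (int (Suc m * K)) + Z (- int (Suc m * K))) * (Z (int K) + 1)
      - ev (Pmq K m) * (Z (int K) + 1)"
    by (simp only: Pmq.simps ev_diff ev_Cq left_diff_distrib)
  also have "\<dots> = Z ((int (Suc m) + 1) * int K) + Z (- (int (Suc m) * int K))"
    unfolding Suc by (simp add: algebra_simps)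
  finally show ?case .
qed

definition Pq :: "nat \<Rightarrow> nat \<Rightarrow> int poly" where
  "Pq K a = (if a mod K = 0 then Pmq K (a div K) else (Uq (a mod K) - 1) * Chq K (a div K))"

lemma mon_Pq: assumes "K \<ge> 1" shows "mon a (Pq K a)"
proof (cases "a mod K = 0")
  case True
  then have "a = (a div K) * K" by (metis mult.commute mult_div_mod_eq add_0_right)
  then show ?thesis using True mon_Pmq[OF assms, of "a div K"] unfolding Pq_def by simp
next
  case False
  have "mon (a mod K + (a div K) * K) ((Uq (a mod K) - 1) * Chq K (a div K))"
    using False mon_Uq1 mon_Chq[OF assms] by (intro mon_mult) auto
  then show ?thesis using False unfolding Pq_def by (simp add: mod_div_mult_eq add.commute)
qed



lemma geo1: "(\<Sum>i<N. Z (int i)) * (Z 1 - 1) = Z (int N) - 1"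
  by (induction N) (simp_all add: algebra_simps)

lemma geo2: "(\<Sum>j<N. Z (c + 2 * int j)) * (Z 2 - 1) = Z (c + 2 * int N) - Z c"
  by (induction N) (simp_all add: algebra_simps)

lemma Z_plus1_nz: "Z a + 1 \<noteq> 0" if "a \<noteq> 0"
proof
  assume "Z a + 1 = 0"
  then have "fls_nth (Z a + 1) 0 = 0" by simp
  then show False using that by simp
qed

lemma Z1_minus1_nz: "Z 1 - 1 \<noteq> (0::int fls)"
proof
  assume "Z 1 - 1 = (0::int fls)"
  then have "fls_nth (Z 1 - 1) 1 = 0" by simp
  then show False by simp
qed

lemma FA:
  assumes K: "K = Suc k"
  shows "ev (Pmq K m) * wL k = (Z (int m * int K) + Z (- ((int m + 1) * int K))) * (\<Sum>i<K. Z (int i))"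
proof -
  let ?D = "(Z (int K) + 1) * (Z 1 - 1)"
  have D: "?D \<noteq> 0" using Z_plus1_nz[of "int K"] Z1_minus1_nz K by simp
  have tele: "wL k * (Z 1 - 1) = Z (int K) - Z (- int K)" using wL_tele[of k] K by (simp add: algebra_simps)
  have "ev (Pmq K m) * wL k * ?D = (ev (Pmq K m) * (Z (int K) + 1)) * (wL k * (Z 1 - 1))"
    by (simp add: algebra_simps)
  also have "\<dots> = (Z ((int m + 1) * int K) + Z (- (int m * int K))) * (Z (int K) - Z (- int K))"
    unfolding ev_Pmq_mult tele ..
  also have "\<dots> = (Z (int m * int K) + Z (- ((int m + 1) * int K))) * (Z (int K) - 1) * (Z (int K) + 1)"
    by (simp add: algebra_simps)
  also have "\<dots> = (Z (int m * int K) + Z (- ((int m + 1) * int K))) * ((\<Sum>i<K. Z (int i)) * (Z 1 - 1)) * (Z (int K) + 1)"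
    by (simp only: geo1)
  also have "\<dots> = (Z (int m * int K) + Z (- ((int m + 1) * int K))) * (\<Sum>i<K. Z (int i)) * ?D"
    by (simp only: mult_ac)
  finally show ?thesis using D by simp
qed

lemma FB:
  assumes K: "K = Suc k"
  shows "ev ((Uq r - 1) * Chq K m) * wL k = (Z (int r + 1) + Z (- int r) - 1 - Z 1) *
     (\<Sum>j<(m+1)*K. Z (- int ((m+1)*K) + 2 * int j))"
proof -
  let ?D = "(1 + Z 1) * (Z 1 - 1)"
  have D: "?D \<noteq> 0" using Z_plus1_nz[of 1] Z1_minus1_nz by (simp add: add.commute)
  have tele: "wL k * (Z 1 - 1) = Z (int K) - Z (- int K)" using wL_tele[of k] K by (simp add: algebra_simps)
  have u: "(ev (Uq r) - 1) * (1 + Z 1) = Z (int r + 1) + Z (- int r) - 1 - Z 1"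
    using ev_Uq_mult[of r] by (simp add: algebra_simps)
  have "ev ((Uq r - 1) * Chq K m) * wL k * ?D = ((ev (Uq r) - 1) * (1 + Z 1)) * (ev (Chq K m) * (wL k * (Z 1 - 1)))"
    by (simp add: ev_mult ev_diff ev_1 algebra_simps)
  also have "\<dots> = (Z (int r + 1) + Z (- int r) - 1 - Z 1) * (Z ((int m + 1) * int K) - Z (- ((int m + 1) * int K)))"
    unfolding u tele ev_Chq_mult ..
  also have "\<dots> = (Z (int r + 1) + Z (- int r) - 1 - Z 1) *
     (\<Sum>j<(m+1)*K. Z (- int ((m+1)*K) + 2 * int j)) * (Z 2 - 1)"
    unfolding mult.assoc geo2 by (simp add: algebra_simps)
  also have "Z 2 - 1 = ?D" by (simp add: algebra_simps)
  finally show ?thesis using D by simp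
qed

lemma cnt1: "(\<Sum>i<N. if s = c + int i then 1 else 0 :: int) = (if c \<le> s \<and> s < c + int N then 1 else 0)"
  by (induction N) auto

lemma cnt2: "(\<Sum>j<N. if s = c + 2 * int j then 1 else 0 :: int) =
    (if c \<le> s \<and> s < c + 2 * int N \<and> even (s - c) then 1 else 0)"
proof (induction N)
  case (Suc N)
  then show ?case by (simp, presburger)
qed simp

lemma ZS1: "fls_nth (Z a * (\<Sum>i<N. Z (int i))) s = (if a \<le> s \<and> s < a + int N then 1 else 0)"
proof -
  have "fls_nth (Z a * (\<Sum>i<N. Z (int i))) s = (\<Sum>i<N. fls_nth (Z (a + int i)) s)"
    by (simp only: sum_distrib_left Z_mult fls_nth_sum)
  also have "\<dots> = (\<Sum>i<N. if s = a + int i then 1 else 0)" by (simp only: Z_nth)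
  finally show ?thesis using cnt1 by simp
qed

lemma ZS2: "fls_nth (Z a * (\<Sum>j<N. Z (c + 2 * int j))) s =
   (if a + c \<le> s \<and> s < a + c + 2 * int N \<and> even (s - (a + c)) then 1 else 0)"
proof -
  have "fls_nth (Z a * (\<Sum>j<N. Z (c + 2 * int j))) s = (\<Sum>j<N. fls_nth (Z (a + (c + 2 * int j))) s)"
    by (simp only: sum_distrib_left Z_mult fls_nth_sum)
  also have "\<dots> = (\<Sum>j<N. if s = (a + c) + 2 * int j then 1 else 0)" by (simp add: add.assoc)
  finally show ?thesis using cnt2 by simp
qed

lemma FA_nth:
  assumes K: "K = Suc k"
  shows "fls_nth (ev (Pmq K m) * wL k) s =
    (if int m * int K \<le> s \<and> s < int m * int K + int K then 1 else 0) +
    (if - ((int m + 1) * int K) \<le> s \<and> s < - ((int m + 1) * int K) + int K then 1 else 0)"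
  unfolding FA[OF K] distrib_right fls_plus_nth ZS1 by simp

definition ind :: "int \<Rightarrow> int \<Rightarrow> int" where
  "ind M v = (if - M \<le> v \<and> v < M \<and> even (v + M) then 1 else 0)"

lemma FB_nth:
  assumes K: "K = Suc k"
  shows "fls_nth (ev ((Uq r - 1) * Chq K m) * wL k) s =
    ind (int ((m+1)*K)) (s - int r - 1) + ind (int ((m+1)*K)) (s + int r)
    - ind (int ((m+1)*K)) s - ind (int ((m+1)*K)) (s - 1)"
proof -
  have h: "fls_nth (Z a * (\<Sum>j<(m+1)*K. Z (- int ((m+1)*K) + 2 * int j))) s = ind (int ((m+1)*K)) (s - a)" for a
  proof -
    have "(a + - int ((m + 1) * K) \<le> s \<and>
         s < a + - int ((m + 1) * K) + 2 * int ((m + 1) * K) \<and>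
         even (s - (a + - int ((m + 1) * K)))) = (- int ((m + 1) * K) \<le> s - a \<and>
         s - a < int ((m + 1) * K) \<and> even (s - a + int ((m + 1) * K)))" by presburger
    then show ?thesis unfolding ZS2 ind_def by simp
  qed
  have "fls_nth (ev ((Uq r - 1) * Chq K m) * wL k) s =
     fls_nth (Z (int r + 1) * (\<Sum>j<(m+1)*K. Z (- int ((m+1)*K) + 2 * int j))) s
   + fls_nth (Z (- int r) * (\<Sum>j<(m+1)*K. Z (- int ((m+1)*K) + 2 * int j))) s
   - fls_nth (Z 0 * (\<Sum>j<(m+1)*K. Z (- int ((m+1)*K) + 2 * int j))) s
   - fls_nth (Z 1 * (\<Sum>j<(m+1)*K. Z (- int ((m+1)*K) + 2 * int j))) s"
    unfolding FB[OF K] by (simp add: algebra_simps)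
  then show ?thesis unfolding h by (simp add: algebra_simps)
qed



definition Wb :: "nat \<Rightarrow> int poly" where "Wb d = (if d = 0 then 1 else Cq d)"

lemma ev_Wb: "ev (Wb d) = (if d = 0 then 1 else Z (int d) + Z (- int d))"
  by (simp add: Wb_def ev_1 ev_Cq)

lemma mon_Wb: "mon d (Wb d)"
proof (cases "d = 0")
  case True then show ?thesis by (auto simp: Wb_def mon_def coeff_pCons split: nat.split)
next
  case False then show ?thesis using mon_Cq[of d] by (simp add: Wb_def)
qed

lemma ev_smult: "ev (smult c p) = of_int c * ev p"
proof -
  have "map_poly (of_int :: int \<Rightarrow> int fls) (smult c p) = smult (of_int c) (map_poly of_int p)"
    by (rule poly_eqI) (simp add: coeff_map_poly)
  then show ?thesis unfolding ev_def by simp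
qed

lemma ev_0: "ev 0 = 0" unfolding ev_def by simp

lemma ev_sum: "ev (\<Sum>d\<in>A. f d) = (\<Sum>d\<in>A. ev (f d))"
  by (induction A rule: infinite_finite_induct) (auto simp: ev_0 ev_add)

lemma Wexp: "\<forall>j>b. coeff Q j = 0 \<Longrightarrow> \<exists>lam. Q = (\<Sum>d\<le>b. smult (lam d) (Wb d)) \<and> lam b = coeff Q b"
proof (induction b arbitrary: Q)
  case 0
  then have "degree Q \<le> 0" by (intro degree_le) auto
  then have "degree Q = 0" by simp
  then have q: "Q = [:coeff Q 0:]" by (rule degree_0_id[symmetric])
  have "(\<Sum>d\<le>0. smult (coeff Q 0) (Wb d)) = [:coeff Q 0:]" by (simp add: Wb_def)
  then show ?case using q by (intro exI[of _ "\<lambda>_. coeff Q 0"]) simp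
next
  case (Suc b)
  define c where "c = coeff Q (Suc b)"
  define Q' where "Q' = Q - smult c (Wb (Suc b))"
  have "\<forall>j>b. coeff Q' j = 0"
  proof (intro allI impI)
    fix j assume j: "j > b"
    show "coeff Q' j = 0"
    proof (cases "j = Suc b")
      case True then show ?thesis using mon_Wb[of "Suc b"] by (simp add: Q'_def c_def mon_def)
    next
      case False then show ?thesis using j Suc.prems mon_Wb[of "Suc b"] by (simp add: Q'_def mon_def)
    qed
  qed
  from Suc.IH[OF this] obtain lam where lam: "Q' = (\<Sum>d\<le>b. smult (lam d) (Wb d))" by blast
  define lam' where "lam' = lam(Suc b := c)"
  have "(\<Sum>d\<le>Suc b. smult (lam' d) (Wb d)) = (\<Sum>d\<le>b. smult (lam d) (Wb d)) + smult c (Wb (Suc b))"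
    unfolding lam'_def by (simp add: sum.atMost_Suc)
  also have "\<dots> = Q" using lam by (simp add: Q'_def)
  finally show ?case by (intro exI[of _ lam']) (simp add: lam'_def c_def)
qed

lemma Wexp_ev:
  assumes "\<forall>j>b. coeff Q j = 0"
  obtains lam where "ev Q = (\<Sum>d\<le>b. of_int (lam d) * ev (Wb d))" "lam b = coeff Q b"
    "\<And>t. 1 \<le> t \<Longrightarrow> t \<le> b \<Longrightarrow> lam t = fls_nth (ev Q) (int t)"
proof -
  obtain lam where l: "Q = (\<Sum>d\<le>b. smult (lam d) (Wb d))" "lam b = coeff Q b" using Wexp[OF assms] by blast
  have e: "ev Q = (\<Sum>d\<le>b. of_int (lam d) * ev (Wb d))"
    by (subst l(1)) (simp add: ev_sum ev_smult)
  have "lam t = fls_nth (ev Q) (int t)" if "1 \<le> t" "t \<le> b" for t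
  proof -
    have "fls_nth (ev Q) (int t) = (\<Sum>d\<le>b. lam d * fls_nth (ev (Wb d)) (int t))"
      unfolding e by (simp add: fls_nth_sum)
    also have "\<dots> = (\<Sum>d\<le>b. if d = t then lam d else 0)"
      using that by (intro sum.cong) (auto simp: ev_Wb)
    also have "\<dots> = lam t" using that by simp
    finally show ?thesis by simp
  qed
  then show ?thesis using that e l(2) by blast
qed

lemma LL_W: "LL k (P * ev (Wb d)) = (if d = 0 then fls_nth (P * wL k) 0
   else fls_nth (P * wL k) (- int d) + fls_nth (P * wL k) (int d))"
proof (cases "d = 0")
  case True then show ?thesis by (simp add: ev_Wb LL_def)
next
  case False
  have "P * ev (Wb d) * wL k = (P * wL k) * Z (int d) + (P * wL k) * Z (- int d)"
    using False by (simp add: ev_Wb algebra_simps)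
  then show ?thesis using False unfolding LL_def by simp
qed



lemma indV1: assumes "1 \<le> r" "r < M" "1 \<le> d" "d < M"
  shows "(ind M (-d - r - 1) + ind M (-d + r) - ind M (-d) - ind M (-d - 1)) + (ind M (d - r - 1) + ind M (d + r) - ind M d - ind M (d - 1)) = (if M - r \<le> d then -1 else 0)"
  using assms unfolding ind_def by (auto; presburger)

lemma indV0: assumes "1 \<le> r" "r < M"
  shows "ind M (0 - r - 1) + ind M (0 + r) - ind M 0 - ind M (0 - 1) = 0"
  using assms unfolding ind_def by (auto; presburger)

lemma VB:
  assumes K: "K = Suc k" and r: "1 \<le> r" "r < K" and d: "d < (m+1)*K"
  shows "LL k (ev ((Uq r - 1) * Chq K m) * ev (Wb d)) = (if (m+1)*K - r \<le> d then -1 else 0)"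
proof -
  define M where "M = int ((m+1)*K)"
  define P where "P = ev ((Uq r - 1) * Chq K m)"
  have F: "fls_nth (P * wL k) s = ind M (s - int r - 1) + ind M (s + int r) - ind M s - ind M (s - 1)" for s
    unfolding M_def P_def by (rule FB_nth[OF K])
  have KM: "K \<le> (m+1)*K" by simp
  then have rMn: "r < (m+1)*K" using r(2) by linarith
  then have rM: "int r < M" unfolding M_def by (simp only: of_nat_less_iff)
  have dM: "int d < M" using d unfolding M_def by (simp only: of_nat_less_iff)
  have r1: "1 \<le> int r" using r by simp
  show ?thesis
  proof (cases "d = 0")
    case True
    have "LL k (P * ev (Wb d)) = fls_nth (P * wL k) 0" using True LL_W[of k P d] by simp
    also have "\<dots> = ind M (0 - int r - 1) + ind M (0 + int r) - ind M 0 - ind M (0 - 1)" by (rule F)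
    also have "\<dots> = 0" by (rule indV0[OF r1 rM])
    finally show ?thesis using True rMn unfolding P_def by simp
  next
    case False
    have "LL k (P * ev (Wb d)) = fls_nth (P * wL k) (- int d) + fls_nth (P * wL k) (int d)"
      using False LL_W[of k P d] by simp
    also have "\<dots> = (ind M (- int d - int r - 1) + ind M (- int d + int r) - ind M (- int d) - ind M (- int d - 1)) +
      (ind M (int d - int r - 1) + ind M (int d + int r) - ind M (int d) - ind M (int d - 1))"
      unfolding F by simp
    also have "\<dots> = (if M - int r \<le> int d then -1 else 0)"
      by (rule indV1[OF r1 rM]) (use False dM in auto)
    also have "(M - int r \<le> int d) = ((m+1)*K - r \<le> d)" unfolding M_def using rMn by linarith
    finally show ?thesis unfolding P_def .
  qed
qed

lemma VAarith: fixes c N d :: int assumes "0 \<le> c" "1 \<le> N" "0 \<le> d" "d \<le> c"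
  shows "(if d = 0 then ((if c \<le> 0 \<and> 0 < c + N then 1 else 0) + (if -(c+N) \<le> 0 \<and> 0 < -(c+N) + N then 1 else 0))
  else ((if c \<le> -d \<and> -d < c+N then 1 else 0) + (if -(c+N) \<le> -d \<and> -d < -(c+N)+N then 1 else 0)) + ((if c \<le> d \<and> d < c + N then 1 else 0) + (if -(c+N) \<le> d \<and> d < -(c+N) + N then 1 else 0))) = (if d = c then 1 else (0::int))"
  using assms by (simp split: if_split; linarith)

lemma VA:
  assumes K: "K = Suc k" and d: "d \<le> m*K"
  shows "LL k (ev (Pmq K m) * ev (Wb d)) = (if d = m*K then 1 else 0)"
proof -
  define c where "c = int m * int K"
  have e: "(int m + 1) * int K = c + int K" unfolding c_def by (simp add: algebra_simps)
  have F: "fls_nth (ev (Pmq K m) * wL k) s = (if c \<le> s \<and> s < c + int K then 1 else 0) +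
    (if - (c + int K) \<le> s \<and> s < - (c + int K) + int K then 1 else 0)" for s
    unfolding FA_nth[OF K] e c_def by simp
  have c0: "c \<ge> 0" unfolding c_def by simp
  have dc: "int d \<le> c" using d unfolding c_def by (simp only: of_nat_mult[symmetric] of_nat_le_iff)
  have dd: "(d = m*K) = (int d = c)" unfolding c_def by (simp only: of_nat_mult[symmetric] of_nat_eq_iff)
  have d0: "(d = 0) = (int d = 0)" by simp
  have "LL k (ev (Pmq K m) * ev (Wb d)) = (if int d = 0 then ((if c \<le> 0 \<and> 0 < c + int K then 1 else 0) + (if -(c+int K) \<le> 0 \<and> 0 < -(c+int K) + int K then 1 else 0))
  else ((if c \<le> - int d \<and> - int d < c+int K then 1 else 0) + (if -(c+int K) \<le> - int d \<and> - int d < -(c+int K)+int K then 1 else 0)) + ((if c \<le> int d \<and> int d < c + int K then 1 else 0) + (if -(c+int K) \<le> int d \<and> int d < -(c+int K) + int K then 1 else 0)))"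
    unfolding LL_W F d0 ..
  also have "\<dots> = (if int d = c then 1 else 0)"
    using VAarith[OF c0 _ _ dc] K by simp
  finally show ?thesis unfolding dd .
qed



lemma Z_mult_nth[simp]: "fls_nth (Z i * f) t = fls_nth f (t - i)"
  using mult_Z_nth[of f i t] by (simp add: mult.commute)

lemma ChF: assumes "K \<ge> 1"
  shows "fls_nth (ev (Chq K m)) (int (m*K)) = 1 \<and>
     (\<forall>u. int (m*K) - int K < u \<and> u < int (m*K) \<longrightarrow> fls_nth (ev (Chq K m)) u = 0)"
  using assms
proof (induction K m rule: Chq.induct)
  case (1 K) then show ?case by (simp add: ev_1)
next
  case (2 K) then show ?case by (simp add: ev_Cq)
next
  case (3 K m)
  have above: "fls_nth (ev (Chq K m)) u = 0" if "int (m*K) < u" for u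
    using ev_nth_above[of "m*K" "Chq K m" u] mon_Chq[OF 3(2), of m] that unfolding mon_def by auto
  have e: "ev (Chq K (Suc (Suc m))) = ev (Chq K m) + (Z (int (Suc (Suc m) * K)) + Z (- int (Suc (Suc m) * K)))"
    by (simp only: Chq.simps ev_add ev_Cq)
  have a1: "fls_nth (ev (Chq K m)) (int (Suc (Suc m) * K)) = 0"
    using 3(2) by (intro above) (simp add: algebra_simps)
  show ?case
  proof (intro conjI allI impI)
    show "fls_nth (ev (Chq K (Suc (Suc m)))) (int (Suc (Suc m) * K)) = 1"
    proof -
      have "Suc (Suc m) * K > 0" using 3(2) by simp
      then have pos: "int (Suc (Suc m) * K) > 0" by linarith
      then have ne: "int (Suc (Suc m) * K) \<noteq> - int (Suc (Suc m) * K)" by linarith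
      show ?thesis unfolding e fls_plus_nth Z_nth using a1 ne by simp
    qed
  next
    fix u assume u: "int (Suc (Suc m) * K) - int K < u \<and> u < int (Suc (Suc m) * K)"
    have mk: "int (m*K) < u" using u by (simp add: algebra_simps)
    have h0: "0 \<le> int (Suc (Suc m) * K)" by simp
    have n1: "u \<noteq> int (Suc (Suc m) * K)" and n2: "u \<noteq> - int (Suc (Suc m) * K)" using u h0 mk by (linarith, simp, linarith)
    show "fls_nth (ev (Chq K (Suc (Suc m)))) u = 0"
      unfolding e fls_plus_nth Z_nth using above[OF mk] n1 n2 by simp
  qed
qed

lemma TopC:
  assumes K: "K \<ge> 1" and r: "1 \<le> r" "r < K" and i: "i < r"
  shows "fls_nth (ev ((Uq r - 1) * Chq K m)) (int (m*K + r - i)) = (-1)^i"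
proof -
  let ?P = "ev ((Uq r - 1) * Chq K m)"
  let ?C = "ev (Chq K m)"
  have monP: "mon (r + m*K) ((Uq r - 1) * Chq K m)" using mon_Uq1[OF r(1)] mon_Chq[OF K] by (rule mon_mult)
  have Pabove: "fls_nth ?P u = 0" if "int (m*K + r) < u" for u
    using ev_nth_above[of "r + m*K" _ u] monP that unfolding mon_def by (auto simp: add.commute)
  have Cabove: "fls_nth ?C u = 0" if "int (m*K) < u" for u
    using ev_nth_above[of "m*K" "Chq K m" u] mon_Chq[OF K, of m] that unfolding mon_def by auto
  have Ctop: "fls_nth ?C (int (m*K)) = 1" and Cgap: "\<And>u. int (m*K) - int K < u \<Longrightarrow> u < int (m*K) \<Longrightarrow> fls_nth ?C u = 0"
    using ChF[OF K, of m] by auto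
  have eq: "?P * (1 + Z 1) = (Z (int r + 1) + Z (- int r) - 1 - Z 1) * ?C"
  proof -
    have "?P * (1 + Z 1) = ((ev (Uq r) - 1) * (1 + Z 1)) * ?C" by (simp add: ev_mult ev_diff ev_1 algebra_simps)
    also have "(ev (Uq r) - 1) * (1 + Z 1) = Z (int r + 1) + Z (- int r) - 1 - Z 1"
      using ev_Uq_mult[of r] by (simp add: algebra_simps)
    finally show ?thesis .
  qed
  have rec: "fls_nth ?P s + fls_nth ?P (s - 1) = (if s = int (m*K + r) + 1 then 1 else 0)"
    if s: "int (m*K) + 2 \<le> s" "s \<le> int (m*K + r) + 1" for s
  proof -
    have "fls_nth (?P * (1 + Z 1)) s = fls_nth ?P s + fls_nth ?P (s - 1)" by (simp add: algebra_simps)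
    also have "fls_nth (?P * (1 + Z 1)) s = fls_nth ?C (s - int r - 1) + fls_nth ?C (s + int r) - fls_nth ?C s - fls_nth ?C (s - 1)"
      unfolding eq by (simp add: algebra_simps)
    also have "fls_nth ?C (s + int r) = 0" using s r by (intro Cabove) simp
    also have "fls_nth ?C s = 0" using s by (intro Cabove) simp
    also have "fls_nth ?C (s - 1) = 0" using s by (intro Cabove) simp
    also have "fls_nth ?C (s - int r - 1) = (if s = int (m*K + r) + 1 then 1 else 0)"
    proof (cases "s = int (m*K + r) + 1")
      case True then show ?thesis using Ctop by simp
    next
      case False then show ?thesis using s r by (intro trans[OF Cgap]) auto
    qed
    finally show ?thesis by simp
  qed
  show ?thesis using i
  proof (induction i)
    case 0
    have "fls_nth ?P (int (m*K + r) + 1) = 0" by (intro Pabove) simp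
    then show ?case using rec[of "int (m*K + r) + 1"] r by simp
  next
    case (Suc i)
    have ee: "int (m*K + r - i) - 1 = int (m*K + r - Suc i)" using Suc.prems by simp
    have "fls_nth ?P (int (m*K + r - i)) + fls_nth ?P (int (m*K + r - Suc i)) = 0"
      using rec[of "int (m*K + r - i)", unfolded ee] Suc.prems by auto
    moreover have "fls_nth ?P (int (m*K + r - i)) = (-1)^i" using Suc by simp
    ultimately show ?case by simp
  qed
qed



definition Gc :: "nat \<Rightarrow> nat \<Rightarrow> nat \<Rightarrow> int" where
  "Gc K a b = (if a mod K = 0 \<or> b mod K = 0 then (if a = b then 1 else 0)
     else if a div K = b div K \<and> K \<le> a mod K + b mod K then (if even (a mod K + b mod K - K) then -1 else 0)
     else 0)"

lemma Gc_sym: "Gc K a b = Gc K b a"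
  unfolding Gc_def by (auto simp: add.commute)

lemma altsum: "\<theta> \<le> b \<Longrightarrow> (\<Sum>d\<in>{\<theta>..b}. (-1::int)^(b-d)) = (if even (b - \<theta>) then 1 else 0)"
proof (induction b)
  case 0 then show ?case by simp
next
  case (Suc b)
  show ?case
  proof (cases "\<theta> = Suc b")
    case True then show ?thesis by simp
  next
    case False
    then have t: "\<theta> \<le> b" using Suc.prems by simp
    have e: "{\<theta>..Suc b} = insert (Suc b) {\<theta>..b}" using t by auto
    have "(\<Sum>d\<in>{\<theta>..Suc b}. (-1::int)^(Suc b-d)) = 1 + (\<Sum>d\<in>{\<theta>..b}. (-1::int)^(Suc b-d))"
      unfolding e by simp
    also have "(\<Sum>d\<in>{\<theta>..b}. (-1::int)^(Suc b-d)) = - (\<Sum>d\<in>{\<theta>..b}. (-1::int)^(b-d))"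
      by (subst sum_negf[symmetric], rule sum.cong) (auto simp: Suc_diff_le)
    finally show ?thesis using Suc.IH[OF t] t by (auto simp: Suc_diff_le)
  qed
qed

lemma sum_if_ge: "(\<Sum>d\<le>(b::nat). if \<theta> \<le> d then f d else 0) = (\<Sum>d\<in>{\<theta>..b}. f d)"
  by (rule sum.mono_neutral_cong_right[of "{..b}" "{\<theta>..b}"]) auto

lemma Gram_le:
  assumes K: "K = Suc k" and ba: "b \<le> a"
  shows "LL k (ev (Pq K a) * ev (Pq K b)) = Gc K a b"
proof -
  have K1: "K \<ge> 1" using K by simp
  have monb: "mon b (Pq K b)" using mon_Pq[OF K1] .
  obtain lam where lam: "ev (Pq K b) = (\<Sum>d\<le>b. of_int (lam d) * ev (Wb d))" "lam b = coeff (Pq K b) b"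
    "\<And>t. 1 \<le> t \<Longrightarrow> t \<le> b \<Longrightarrow> lam t = fls_nth (ev (Pq K b)) (int t)"
    using Wexp_ev[of b "Pq K b"] monb unfolding mon_def by blast
  have lb: "lam b = 1" using lam(2) monb unfolding mon_def by simp
  have S: "LL k (ev (Pq K a) * ev (Pq K b)) = (\<Sum>d\<le>b. lam d * LL k (ev (Pq K a) * ev (Wb d)))"
    unfolding lam(1) sum_distrib_left LL_sum
    by (rule sum.cong) (simp_all add: mult.left_commute LL_of_int)
  define m where "m = a div K"
  define r where "r = a mod K"
  have a_eq: "a = m*K + r" unfolding m_def r_def by simp
  have rK: "r < K" unfolding r_def using K by simp
  show ?thesis
  proof (cases "r = 0")
    case True
    have Pa: "Pq K a = Pmq K m" using True unfolding Pq_def m_def r_def by simp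
    have "LL k (ev (Pq K a) * ev (Pq K b)) = (\<Sum>d\<le>b. lam d * (if d = a then 1 else 0))"
      unfolding S unfolding Pa using VA[OF K, of _ m] ba a_eq True by (intro sum.cong) auto
    also have "\<dots> = (\<Sum>d\<le>b. if d = a then lam d else 0)" by (rule sum.cong) auto
    also have "\<dots> = (if a = b then 1 else 0)" using ba lb by auto
    finally show ?thesis unfolding Gc_def using True r_def by simp
  next
    case False
    have r1: "1 \<le> r" using False by simp
    have Pa: "Pq K a = (Uq r - 1) * Chq K m" using False unfolding Pq_def m_def r_def by simp
    define \<theta> where "\<theta> = (m+1)*K - r"
    have th: "\<theta> = m*K + (K - r)" unfolding \<theta>_def using rK by (simp add: algebra_simps)
    have aM: "a < (m+1)*K" using a_eq rK by simp
    have "LL k (ev (Pq K a) * ev (Pq K b)) = (\<Sum>d\<le>b. if \<theta> \<le> d then - lam d else 0)"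
      unfolding S unfolding Pa \<theta>_def using VB[OF K r1 rK] ba aM by (intro sum.cong) auto
    also have "\<dots> = (\<Sum>d\<in>{\<theta>..b}. - lam d)" by (rule sum_if_ge)
    finally have L: "LL k (ev (Pq K a) * ev (Pq K b)) = (\<Sum>d\<in>{\<theta>..b}. - lam d)" .
    show ?thesis
    proof (cases "b < \<theta>")
      case True
      have G0: "Gc K a b = 0"
      proof -
        have bd: "b = (b div K) * K + b mod K" by simp
        have "\<not> (b div K = m \<and> K \<le> r + b mod K)"
        proof
          assume h: "b div K = m \<and> K \<le> r + b mod K"
          then have "b = m*K + b mod K" using bd by simp
          then show False using True th h rK by linarith
        qed
        moreover have "b mod K = 0 \<longrightarrow> a \<noteq> b" using \<open>r \<noteq> 0\<close> r_def by auto
        ultimately show ?thesis unfolding Gc_def using False r_def m_def by auto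
      qed
      show ?thesis unfolding L G0 using True by simp
    next
      case False
      then have tb: "\<theta> \<le> b" by simp
      define rb where "rb = b - m*K"
      have bdiv: "b div K = m" using tb ba aM th by (intro div_nat_eqI) (auto simp: algebra_simps)
      have bmod: "b mod K = rb" using bdiv unfolding rb_def by (metis minus_div_mult_eq_mod)
      have rb1: "1 \<le> rb" "rb < K" "K \<le> r + rb" using tb th ba aM rK unfolding rb_def by auto
      have Pb: "Pq K b = (Uq rb - 1) * Chq K m" using bdiv bmod rb1 unfolding Pq_def by simp
      have lamd: "lam d = (-1)^(b - d)" if "d \<in> {\<theta>..b}" for d
      proof -
        have d1: "1 \<le> d" "d \<le> b" using that th rK by auto
        have i: "b - d < rb" using that th rb1 rK unfolding rb_def by auto
        have bb: "m*K + rb - (b - d) = d" using that th unfolding rb_def by auto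
        show ?thesis using lam(3)[OF d1] TopC[OF K1 rb1(1) rb1(2) i, of m] unfolding Pb bb by simp
      qed
      have "LL k (ev (Pq K a) * ev (Pq K b)) = - (\<Sum>d\<in>{\<theta>..b}. (-1::int)^(b-d))"
        unfolding L sum_negf[symmetric] using lamd by (intro sum.cong) auto
      also have "\<dots> = - (if even (b - \<theta>) then 1 else 0)" using altsum[OF tb] by simp
      also have "b - \<theta> = r + rb - K" using tb th rK unfolding rb_def by auto
      finally show ?thesis unfolding Gc_def using \<open>r \<noteq> 0\<close> r_def m_def bdiv bmod rb1 by auto
    qed
  qed
qed

lemma Gram:
  assumes K: "K = Suc k"
  shows "LL k (ev (Pq K a) * ev (Pq K b)) = Gc K a b"
proof (cases "b \<le> a")
  case True then show ?thesis using Gram_le[OF K] by simp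
next
  case False
  then have "LL k (ev (Pq K b) * ev (Pq K a)) = Gc K b a" using Gram_le[OF K] by simp
  then show ?thesis by (simp add: mult.commute Gc_sym)
qed



lemma det_anti:
  assumes "M \<in> carrier_mat N N"
    and "\<And>i j. i < N \<Longrightarrow> j < N \<Longrightarrow> i + j + 1 < N \<Longrightarrow> M $$ (i,j) = 0"
  shows "det M = (-1)^(N choose 2) * (\<Prod>i<N. M $$ (i, N - 1 - i))"
  using assms
proof (induction N arbitrary: M)
  case 0
  then show ?case by (simp add: numeral_2_eq_2)
next
  case (Suc N)
  have "det M = (\<Sum>j<Suc N. M $$ (0,j) * cofactor M 0 j)"
    using laplace_expansion_row[OF Suc.prems(1), of 0] by simp
  also have "\<dots> = M $$ (0,N) * cofactor M 0 N"
    using Suc.prems(2)[of 0] by (simp add: sum.lessThan_Suc)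
  also have "cofactor M 0 N = (-1)^N * det (mat_delete M 0 N)"
    unfolding cofactor_def by simp
  also have "det (mat_delete M 0 N) = (-1)^(N choose 2) * (\<Prod>i<N. mat_delete M 0 N $$ (i, N - 1 - i))"
  proof (rule Suc.IH)
    show "mat_delete M 0 N \<in> carrier_mat N N" using mat_delete_carrier[OF Suc.prems(1)] by simp
    fix i j assume "i < N" "j < N" "i + j + 1 < N"
    then show "mat_delete M 0 N $$ (i,j) = 0"
      using Suc.prems unfolding mat_delete_def by auto
  qed
  also have "(\<Prod>i<N. mat_delete M 0 N $$ (i, N - 1 - i)) = (\<Prod>i<N. M $$ (Suc i, N - 1 - i))"
    using Suc.prems(1) by (intro prod.cong) (auto simp: mat_delete_def)
  finally have "det M = (-1)^N * (-1)^(N choose 2) * (M $$ (0, Suc N - 1 - 0) * (\<Prod>i<N. M $$ (Suc i, Suc N - 1 - Suc i)))"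
    by (simp add: algebra_simps)
  also have "M $$ (0, Suc N - 1 - 0) * (\<Prod>i<N. M $$ (Suc i, Suc N - 1 - Suc i)) = (\<Prod>i<Suc N. M $$ (i, Suc N - 1 - i))"
    by (rule prod.lessThan_Suc_shift[symmetric])
  also have "(-1)^N * (-1)^(N choose 2) = ((-1)^(Suc N choose 2) :: 'a)"
    by (simp add: power_add[symmetric] numeral_2_eq_2)
  finally show ?case .
qed

lemma Gc_shift: "K \<ge> 1 \<Longrightarrow> Gc K (i + K) (j + K) = Gc K i j"
  unfolding Gc_def by auto

lemma Gc_cross: assumes "K \<ge> 1" "i < K" "K \<le> j" shows "Gc K i j = 0" "Gc K j i = 0"
proof -
  have "j div K > 0" using assms by (simp add: div_greater_zero_iff)
  then show "Gc K i j = 0" "Gc K j i = 0" unfolding Gc_def using assms by auto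
qed

lemma G_split:
  assumes K: "K \<ge> 1"
  shows "mat (K + n) (K + n) (\<lambda>(i,j). Gc K i j) =
     four_block_mat (mat K K (\<lambda>(i,j). Gc K i j)) (0\<^sub>m K n) (0\<^sub>m n K) (mat n n (\<lambda>(i,j). Gc K i j))"
proof (rule eq_matI)
  fix i j assume i: "i < dim_row (four_block_mat (mat K K (\<lambda>(i,j). Gc K i j)) (0\<^sub>m K n) (0\<^sub>m n K) (mat n n (\<lambda>(i,j). Gc K i j)))"
    and j: "j < dim_col (four_block_mat (mat K K (\<lambda>(i,j). Gc K i j)) (0\<^sub>m K n) (0\<^sub>m n K) (mat n n (\<lambda>(i,j). Gc K i j)))"
  have sh: "Gc K i j = Gc K (i - K) (j - K)" if "K \<le> i" "K \<le> j"
    using Gc_shift[OF K, of "i - K" "j - K"] that by simp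
  show "mat (K + n) (K + n) (\<lambda>(i,j). Gc K i j) $$ (i,j) =
     four_block_mat (mat K K (\<lambda>(i,j). Gc K i j)) (0\<^sub>m K n) (0\<^sub>m n K) (mat n n (\<lambda>(i,j). Gc K i j)) $$ (i,j)"
    using i j Gc_cross[OF K, of i j] Gc_cross[OF K, of j i] sh by auto
qed auto

lemma det_GK:
  assumes K: "K \<ge> 1"
  shows "det (mat K K (\<lambda>(i,j). Gc K i j)) = (-1)^(K choose 2)"
proof -
  obtain K' where K': "K = Suc K'" using K by (cases K) auto
  define H where "H = mat K' K' (\<lambda>(i,j). Gc K (Suc i) (Suc j))"
  have split: "mat K K (\<lambda>(i,j). Gc K i j) = four_block_mat (mat 1 1 (\<lambda>_. 1)) (0\<^sub>m 1 K') (0\<^sub>m K' 1) H"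
  proof (rule eq_matI)
    fix i j assume "i < dim_row (four_block_mat (mat 1 1 (\<lambda>_. 1 :: int)) (0\<^sub>m 1 K') (0\<^sub>m K' 1) H)"
      "j < dim_col (four_block_mat (mat 1 1 (\<lambda>_. 1 :: int)) (0\<^sub>m 1 K') (0\<^sub>m K' 1) H)"
    then have ij: "i < K" "j < K" unfolding H_def K' by auto
    then show "mat K K (\<lambda>(i,j). Gc K i j) $$ (i,j) = four_block_mat (mat 1 1 (\<lambda>_. 1)) (0\<^sub>m 1 K') (0\<^sub>m K' 1) H $$ (i,j)"
      unfolding H_def K' by (cases i; cases j) (auto simp: Gc_def)
  qed (auto simp: H_def K')
  have "det (mat K K (\<lambda>(i,j). Gc K i j)) = det (mat 1 1 (\<lambda>_. 1 :: int)) * det H"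
    unfolding split by (rule det_four_block_mat_lower_left_zero) (auto simp: H_def)
  also have "det (mat 1 1 (\<lambda>_. 1 :: int)) = 1" by (simp add: det_single)
  also have "det H = (-1)^(K' choose 2) * (\<Prod>i<K'. H $$ (i, K' - 1 - i))"
    by (rule det_anti) (auto simp: H_def Gc_def K')
  also have "(\<Prod>i<K'. H $$ (i, K' - 1 - i)) = (\<Prod>i<K'. -1)"
    by (rule prod.cong) (auto simp: H_def Gc_def K')
  also have "(-1::int)^(K' choose 2) * (\<Prod>i<K'. -1) = (-1)^(K choose 2)"
    by (simp add: K' power_add[symmetric] numeral_2_eq_2 add.commute)
  finally show ?thesis by simp
qed

lemma det_G:
  assumes K: "K \<ge> 1"
  shows "det (mat n n (\<lambda>(i,j). Gc K i j)) =
    (if n mod K = 0 \<or> n mod K = 1 then (-1)^((n div K) * (K choose 2)) else 0)"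
proof (induction n rule: less_induct)
  case (less n)
  show ?case
  proof (cases "n < K")
    case True
    consider "n = 0" | "n = 1" | "2 \<le> n" by linarith
    then show ?thesis
    proof cases
      case 1 then show ?thesis by simp
    next
      case 2 then show ?thesis using True by (simp add: det_single Gc_def)
    next
      case 3
      have "det (mat n n (\<lambda>(i,j). Gc K i j)) = (\<Sum>j<n. mat n n (\<lambda>(i,j). Gc K i j) $$ (1,j) * cofactor (mat n n (\<lambda>(i,j). Gc K i j)) 1 j)"
        using 3 by (intro laplace_expansion_row) auto
      also have "\<dots> = 0"
        using 3 True by (intro sum.neutral) (auto simp: Gc_def)
      finally show ?thesis using 3 True by simp
    qed
  next
    case False
    define n' where "n' = n - K"
    have n: "n = K + n'" using False unfolding n'_def by simp
    have "det (mat n n (\<lambda>(i,j). Gc K i j)) = det (mat K K (\<lambda>(i,j). Gc K i j)) * det (mat n' n' (\<lambda>(i,j). Gc K i j))"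
      unfolding n G_split[OF K] by (rule det_four_block_mat_lower_left_zero) auto
    also have "\<dots> = (-1)^(K choose 2) * (if n' mod K = 0 \<or> n' mod K = 1 then (-1)^((n' div K) * (K choose 2)) else 0)"
      using det_GK[OF K] less[of n'] K n by simp
    also have "\<dots> = (if n mod K = 0 \<or> n mod K = 1 then (-1)^((n div K) * (K choose 2)) else 0)"
      using K unfolding n by (simp add: power_add[symmetric] algebra_simps)
    finally show ?thesis .
  qed
qed



lemma LL_bilin:
  "LL k ((\<Sum>r<n. of_int (c r) * xL^r) * (\<Sum>q<n. of_int (d q) * xL^q)) =
   (\<Sum>r<n. \<Sum>q<n. c r * d q * LL k (xL^r * xL^q))"
proof -
  have eq: "(\<Sum>r<n. of_int (c r) * xL^r) * (\<Sum>q<n. of_int (d q) * xL^q) =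
     (\<Sum>r<n. \<Sum>q<n. of_int (c r * d q) * (xL^r * xL^q))"
    by (simp add: sum_product algebra_simps)
  show ?thesis unfolding eq LL_sum LL_of_int ..
qed

theorem corollary17:
  fixes n k :: nat
  assumes "n \<ge> 1"
  shows "det (mat n n (\<lambda>(i, j). \<Sum>l\<in>{-int k..int k + 1}. binom_int (2*i + 2*j) (int (i + j) + l)))
    = (if n mod (k + 1) = 0 then (-1) ^ ((n div (k + 1)) * ((k + 1) choose 2))
       else if n mod (k + 1) = 1 then (-1) ^ ((n div (k + 1)) * ((k + 1) choose 2))
       else 0)"
proof -
  define K where "K = Suc k"
  have K1: "K \<ge> 1" unfolding K_def by simp
  define A where "A = mat n n (\<lambda>(i, j). \<Sum>l\<in>{-int k..int k + 1}. binom_int (2*i + 2*j) (int (i + j) + l))"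
  define T where "T = mat n n (\<lambda>(a, r). coeff (Pq K a) r)"
  have AC: "A \<in> carrier_mat n n" and TC: "T \<in> carrier_mat n n" unfolding A_def T_def by auto
  have Aent: "A $$ (r,q) = LL k (xL^r * xL^q)" if "r < n" "q < n" for r q
    using that unfolding A_def by (simp add: LL_xpow power_add[symmetric] algebra_simps)
  have ent: "(T * A * transpose_mat T) $$ (a,b) = Gc K a b" if ab: "a < n" "b < n" for a b
  proof -
    have "(T * A * transpose_mat T) $$ (a,b) = (\<Sum>q<n. (\<Sum>r<n. coeff (Pq K a) r * A $$ (r,q)) * coeff (Pq K b) q)"
      using ab AC TC unfolding T_def by (simp add: scalar_prod_def atLeast0LessThan)
    also have "\<dots> = (\<Sum>q<n. \<Sum>r<n. coeff (Pq K a) r * coeff (Pq K b) q * LL k (xL^r * xL^q))"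
    proof (rule sum.cong[OF refl])
      fix q assume q: "q \<in> {..<n}"
      show "(\<Sum>r<n. coeff (Pq K a) r * A $$ (r,q)) * coeff (Pq K b) q =
        (\<Sum>r<n. coeff (Pq K a) r * coeff (Pq K b) q * LL k (xL^r * xL^q))"
        unfolding sum_distrib_right by (rule sum.cong[OF refl]) (use q Aent in auto)
    qed
    also have "\<dots> = (\<Sum>r<n. \<Sum>q<n. coeff (Pq K a) r * coeff (Pq K b) q * LL k (xL^r * xL^q))"
      by (rule sum.swap)
    also have "\<dots> = LL k (ev (Pq K a) * ev (Pq K b))"
    proof -
      have "ev (Pq K a) = (\<Sum>r<n. of_int (coeff (Pq K a) r) * xL^r)"
        using mon_Pq[OF K1, of a] ab unfolding mon_def by (intro ev_sum_form[of a]) auto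
      moreover have "ev (Pq K b) = (\<Sum>r<n. of_int (coeff (Pq K b) r) * xL^r)"
        using mon_Pq[OF K1, of b] ab unfolding mon_def by (intro ev_sum_form[of b]) auto
      ultimately show ?thesis using LL_bilin by simp
    qed
    also have "\<dots> = Gc K a b" using Gram[of K k] K_def by simp
    finally show ?thesis .
  qed
  have eqG: "T * A * transpose_mat T = mat n n (\<lambda>(a,b). Gc K a b)"
    by (rule eq_matI) (use ent AC TC in auto)
  have detT: "det T = 1"
  proof -
    have "det T = prod_list (diag_mat T)"
      by (rule det_lower_triangular[OF _ TC])
        (use mon_Pq[OF K1] in \<open>auto simp: T_def mon_def\<close>)
    also have "diag_mat T = map (\<lambda>_. 1) [0..<n]"
      using mon_Pq[OF K1] unfolding diag_mat_def T_def mon_def by simp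
    finally show ?thesis by (simp add: map_replicate_const)
  qed
  have "det (T * A * transpose_mat T) = det T * det A * det (transpose_mat T)"
    using AC TC by (simp add: det_mult[of _ n])
  then have "det A = det (mat n n (\<lambda>(a,b). Gc K a b))"
    unfolding eqG using detT det_transpose[OF TC] by simp
  also have "\<dots> = (if n mod K = 0 \<or> n mod K = 1 then (-1)^((n div K) * (K choose 2)) else 0)"
    by (rule det_G[OF K1])
  finally show ?thesis unfolding A_def K_def by auto
qed


end
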